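(* For every $1\le w\le\infty$, the thresholded matrix $\hat\Sigma$ from step (2) of DP-Thresholding satisfies $$\mathbb{E}\|\hat\Sigma-\Sigma\|_w^2=O\Big(\frac{s^2\log p\,\log(1/\delta)}{n\epsilon^2}\Big),$$ with implied constant depending only on $\sigma^2$ (uniform in $w$).
   Context: For a $p\times p$ matrix $A$, $\|A\|_w=\sup_{x\neq0}\|Ax\|_w/\|x\|_w$ is the operator norm induced by the vector $\ell_w$ norm; in particular $\|A\|_1$ is the maximum absolute column sum and $\|A\|_\infty$ the maximum absolute row sum. Setting: $x_1,\dots,x_n$ are i.i.d. random vectors in $\mathbb{R}^p$ (high-dimensional regime $p\gg n\ge \mathrm{poly}(\log p)$) with $\mathbb{E}x_i=0$, $\|x_i\|_2\le 1$ almost surely, sub-Gaussian with parameter $\sigma^2$: $\mathbb{P}\{|v^Tx_i|>t\}\le e^{-t^2/(2\sigma^2)}$ for all $t>0$ and all unit vectors $v$. The covariance $\Sigma=(\sigma_{ij})$ lies in $\mathcal{G}_0(s)$: for each column $j$, the vector of off-diagonal entries $(\sigma_{ij})_{i\neq j}$ has at most $s$ nonzeros. $\Sigma^*=(\sigma^*_{ij})=\frac1n\sum_i x_ix_i^T$. The constant $\gamma>0$ (depending only on $\sigma^2$) is one for which there is a constant $C_1$ with $\mathbb{P}(|\sigma^*_{ij}-\sigma_{ij}|>t)\le C_1e^{-8nt^2/\gamma^2}$ for all $i,j$ and all sufficiently small $|t|$, in particular $\mathbb{P}(|\sigma^*_{ij}-\sigma_{ij}|>\gamma\sqrt{\log p/n})\le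 C_1p^{-8}$. DP-Thresholding, steps (1)-(2), with input $0<\epsilon,\delta\le1$: (1) $\tilde\Sigma=(\tilde\sigma_{ij})=\Sigma^*+N$, where $N$ is a symmetric $p\times p$ matrix whose upper-triangular entries (including the diagonal) are i.i.d. $\mathcal{N}(0,\sigma_1^2)$, independent of the data, with $\sigma_1^2=\frac{2\ln(1.25/\delta)}{n^2\epsilon^2}$, lower triangle copied from upper; (2) $\hat\sigma_{ij}=\tilde\sigma_{ij}\cdot\mathbb{I}[|\tilde\sigma_{ij}|>\tau]$ with $\tau=\gamma\sqrt{\frac{\log p}{n}}+\frac{4\sqrt{2\ln(1.25/\delta)}\sqrt{\log p}}{n\epsilon}$. *)

theory Defs
  imports "HOL-Probability.Probability"
begin

text \<open>Vectors in R^p are functions nat => real, only indices < p are relevant;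
  p x p matrices are functions nat => nat => real, only indices < p are relevant.\<close>

definition lw_norm :: "nat \<Rightarrow> ereal \<Rightarrow> (nat \<Rightarrow> real) \<Rightarrow> real" where
  "lw_norm p w x =
     (if w = \<infinity> then Max ((\<lambda>j. \<bar>x j\<bar>) ` {..<p})
      else (\<Sum>j<p. \<bar>x j\<bar> powr real_of_ereal w) powr (1 / real_of_ereal w))"

definition mat_vec :: "nat \<Rightarrow> (nat \<Rightarrow> nat \<Rightarrow> real) \<Rightarrow> (nat \<Rightarrow> real) \<Rightarrow> (nat \<Rightarrow> real)" where
  "mat_vec p A x = (\<lambda>i. \<Sum>j<p. A i j * x j)"

definition op_norm :: "nat \<Rightarrow> ereal \<Rightarrow> (nat \<Rightarrow> nat \<Rightarrow> real) \<Rightarrow> real" where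
  "op_norm p w A =
     (SUP x\<in>{x. (\<forall>j\<ge>p. x j = 0) \<and> (\<exists>j<p. x j \<noteq> 0)}.
        lw_norm p w (mat_vec p A x) / lw_norm p w x)"

text \<open>Population covariance of a (mean zero) distribution D on R^p.\<close>
definition cov :: "(nat \<Rightarrow> real) measure \<Rightarrow> nat \<Rightarrow> nat \<Rightarrow> real" where
  "cov D i j = (\<integral>x. x i * x j \<partial>D)"

definition sample_cov :: "nat \<Rightarrow> (nat \<Rightarrow> nat \<Rightarrow> real) \<Rightarrow> nat \<Rightarrow> nat \<Rightarrow> real" where
  "sample_cov n xs i j = (1 / real n) * (\<Sum>k<n. xs k i * xs k j)"

definition G0 :: "nat \<Rightarrow> nat \<Rightarrow> (nat \<Rightarrow> nat \<Rightarrow> real) \<Rightarrow> bool" where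
  "G0 p s S = (\<forall>j<p. card {i. i < p \<and> i \<noteq> j \<and> S i j \<noteq> 0} \<le> s)"

definition dp_sigma1 :: "nat \<Rightarrow> real \<Rightarrow> real \<Rightarrow> real" where
  "dp_sigma1 n \<epsilon> \<delta> = sqrt (2 * ln (1.25 / \<delta>)) / (real n * \<epsilon>)"

definition dp_tau :: "real \<Rightarrow> nat \<Rightarrow> nat \<Rightarrow> real \<Rightarrow> real \<Rightarrow> real" where
  "dp_tau \<gamma> p n \<epsilon> \<delta> =
     \<gamma> * sqrt (ln (real p) / real n)
     + 4 * sqrt (2 * ln (1.25 / \<delta>)) * sqrt (ln (real p)) / (real n * \<epsilon>)"

text \<open>Upper-triangular index set (including diagonal) for the independent noise entries.\<close>
definition upper_idx :: "nat \<Rightarrow> (nat \<times> nat) set" where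
  "upper_idx p = {(i, j). i \<le> j \<and> j < p}"

definition sym_noise :: "((nat \<times> nat) \<Rightarrow> real) \<Rightarrow> nat \<Rightarrow> nat \<Rightarrow> real" where
  "sym_noise z i j = z (min i j, max i j)"

definition noise_measure :: "nat \<Rightarrow> real \<Rightarrow> ((nat \<times> nat) \<Rightarrow> real) measure" where
  "noise_measure p \<sigma>1 = PiM (upper_idx p) (\<lambda>_. density lborel (normal_density 0 \<sigma>1))"

text \<open>Step (1)+(2): the thresholded estimator Sigma-hat from sample xs and noise z.\<close>
definition dp_threshold :: "nat \<Rightarrow> real \<Rightarrow> (nat \<Rightarrow> nat \<Rightarrow> real) \<Rightarrow> ((nat \<times> nat) \<Rightarrow> real)
    \<Rightarrow> nat \<Rightarrow> nat \<Rightarrow> real" where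
  "dp_threshold n \<tau> xs z i j =
     (let t = sample_cov n xs i j + sym_noise z i j in if \<bar>t\<bar> > \<tau> then t else 0)"

end

theory Submission
  imports Defs
begin


lemma powr_convex0:
  fixes q :: real assumes q: "q \<ge> 1"
  shows "convex_on {0..} (\<lambda>x::real. x powr q)"
proof (rule convex_onI)
  show "convex {0::real..}" by simp
  fix t x y :: real assume t: "0 < t" "t < 1" and xy: "x \<in> {0..}" "y \<in> {0..}"
  have tq: "t powr q \<le> t" "(1-t) powr q \<le> 1 - t"
    using t q powr_mono'[of 1 q t] powr_mono'[of 1 q "1-t"] by auto
  show "((1 - t) *\<^sub>R x + t *\<^sub>R y) powr q \<le> (1 - t) * x powr q + t * y powr q"
  proof (cases "x = 0")
    case True
    have "(t * y) powr q = t powr q * y powr q" using t xy by (simp add: powr_mult)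
    also have "\<dots> \<le> t * y powr q" using tq by (intro mult_right_mono) auto
    finally show ?thesis using True by simp
  next
    case x: False
    show ?thesis
    proof (cases "y = 0")
      case True
      have "((1-t) * x) powr q = (1-t) powr q * x powr q" using t xy by (simp add: powr_mult)
      also have "\<dots> \<le> (1-t) * x powr q" using tq by (intro mult_right_mono) auto
      finally show ?thesis using True by simp
    next
      case False
      then show ?thesis using x xy t convex_onD[OF powr_convex[OF q], of t x y] by auto
    qed
  qed
qed




lemma wpow:
  fixes c y :: "nat \<Rightarrow> real" and q K :: real
  assumes q: "q \<ge> 1" and c: "\<And>j. j < p \<Longrightarrow> c j \<ge> 0" and y: "\<And>j. j < p \<Longrightarrow> y j \<ge> 0"
    and K: "(\<Sum>j<p. c j) \<le> K"
  shows "(\<Sum>j<p. c j * y j) powr q \<le> K powr (q-1) * (\<Sum>j<p. c j * y j powr q)"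
proof -
  define r where "r = (\<Sum>j<p. c j)"
  have r0: "r \<ge> 0" unfolding r_def using c by (auto intro: sum_nonneg)
  have rhs0: "0 \<le> K powr (q-1) * (\<Sum>j<p. c j * y j powr q)"
    using c by (auto intro!: mult_nonneg_nonneg sum_nonneg)
  show ?thesis
  proof (cases "r = 0")
    case True
    then have "\<forall>j\<in>{..<p}. c j = 0" unfolding r_def using c by (subst sum_nonneg_eq_0_iff[symmetric]) auto
    then have "(\<Sum>j<p. c j * y j) = 0" by simp
    then show ?thesis using rhs0 by simp
  next
    case False
    then have rp: "r > 0" using r0 by simp
    then have ne: "{..<p} \<noteq> {}" unfolding r_def by auto
    have J: "(\<Sum>j<p. (c j / r) *\<^sub>R y j) powr q \<le> (\<Sum>j<p. (c j / r) * (y j powr q))"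
      apply (rule convex_on_sum[OF _ ne powr_convex0[OF q]])
      using c y rp by (auto simp: r_def sum_divide_distrib[symmetric])
    have eq: "(\<Sum>j<p. c j * y j) = r * (\<Sum>j<p. (c j / r) *\<^sub>R y j)"
      using rp by (simp add: sum_distrib_left)
    have m0: "0 \<le> (\<Sum>j<p. (c j / r) *\<^sub>R y j)" using c y rp by (auto intro!: sum_nonneg)
    have "(\<Sum>j<p. c j * y j) powr q = r powr q * (\<Sum>j<p. (c j / r) *\<^sub>R y j) powr q"
      unfolding eq using r0 m0 by (simp add: powr_mult)
    also have "\<dots> \<le> r powr q * (\<Sum>j<p. (c j / r) * (y j powr q))"
      using J by (intro mult_left_mono) auto
    also have "\<dots> = r powr (q-1) * (\<Sum>j<p. c j * y j powr q)"
    proof -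
      have "r powr q = r powr ((q-1)+1)" by simp
      also have "\<dots> = r powr (q-1) * r powr 1" by (rule powr_add)
      finally have "r powr q = r powr (q-1) * r" using rp by simp
      then show ?thesis using rp by (simp add: sum_distrib_left sum_divide_distrib)
    qed
    also have "\<dots> \<le> K powr (q-1) * (\<Sum>j<p. c j * y j powr q)"
      using c q r0 K by (intro mult_right_mono powr_mono2) (auto simp: r_def intro!: sum_nonneg)
    finally show ?thesis .
  qed
qed




lemma mat_vec_abs_le:
  "\<bar>mat_vec p A x i\<bar> \<le> (\<Sum>j<p. \<bar>A i j\<bar> * \<bar>x j\<bar>)"
  unfolding mat_vec_def by (rule order_trans[OF sum_abs]) (simp add: abs_mult)

lemma lw_ratio_le:
  fixes A :: "nat \<Rightarrow> nat \<Rightarrow> real" and K :: real and w :: ereal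
  assumes w: "w \<ge> 1"
    and rows: "\<And>i. i < p \<Longrightarrow> (\<Sum>j<p. \<bar>A i j\<bar>) \<le> K"
    and cols: "\<And>j. j < p \<Longrightarrow> (\<Sum>i<p. \<bar>A i j\<bar>) \<le> K"
    and x: "j0 < p" "x j0 \<noteq> 0"
  shows "lw_norm p w (mat_vec p A x) \<le> K * lw_norm p w x \<and> lw_norm p w x > 0"
proof -
  have K0: "K \<ge> 0" using rows[OF x(1)] by (meson order_trans sum_nonneg abs_ge_zero)
  show ?thesis
  proof (cases w)
    case PInf
    define M where "M = Max ((\<lambda>j. \<bar>x j\<bar>) ` {..<p})"
    have fin: "finite ((\<lambda>j. \<bar>x j\<bar>) ` {..<p})" "(\<lambda>j. \<bar>x j\<bar>) ` {..<p} \<noteq> {}" using x by auto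
    have xM: "\<bar>x j\<bar> \<le> M" if "j < p" for j unfolding M_def using fin that by (intro Max_ge) auto
    have Mpos: "M > 0" using xM[OF x(1)] x(2) by linarith
    have "\<bar>mat_vec p A x i\<bar> \<le> K * M" if i: "i < p" for i
    proof -
      have "\<bar>mat_vec p A x i\<bar> \<le> (\<Sum>j<p. \<bar>A i j\<bar> * \<bar>x j\<bar>)" by (rule mat_vec_abs_le)
      also have "\<dots> \<le> (\<Sum>j<p. \<bar>A i j\<bar> * M)" by (intro sum_mono mult_left_mono xM) auto
      also have "\<dots> = (\<Sum>j<p. \<bar>A i j\<bar>) * M" by (simp add: sum_distrib_right)
      also have "\<dots> \<le> K * M" using rows[OF i] Mpos by (intro mult_right_mono) auto
      finally show ?thesis .
    qed
    then have "Max ((\<lambda>i. \<bar>mat_vec p A x i\<bar>) ` {..<p}) \<le> K * M"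
      using x by (subst Max_le_iff) auto
    then show ?thesis using PInf Mpos unfolding lw_norm_def M_def by simp
  next
    case (real q)
    then have q: "q \<ge> 1" using w by simp
    define Sx where "Sx = (\<Sum>j<p. \<bar>x j\<bar> powr q)"
    have "0 < \<bar>x j0\<bar> powr q" using x by simp
    also have "\<bar>x j0\<bar> powr q \<le> Sx" unfolding Sx_def using x
      by (intro member_le_sum) auto
    finally have Sx: "Sx > 0" .
    have row: "\<bar>mat_vec p A x i\<bar> powr q \<le> K powr (q-1) * (\<Sum>j<p. \<bar>A i j\<bar> * \<bar>x j\<bar> powr q)"
      if i: "i < p" for i
    proof -
      have "\<bar>mat_vec p A x i\<bar> powr q \<le> (\<Sum>j<p. \<bar>A i j\<bar> * \<bar>x j\<bar>) powr q"
        using q by (intro powr_mono2 mat_vec_abs_le) auto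
      also have "\<dots> \<le> K powr (q-1) * (\<Sum>j<p. \<bar>A i j\<bar> * \<bar>x j\<bar> powr q)"
        by (rule wpow[OF q _ _ rows[OF i]]) auto
      finally show ?thesis .
    qed
    have "(\<Sum>i<p. \<bar>mat_vec p A x i\<bar> powr q) \<le> (\<Sum>i<p. K powr (q-1) * (\<Sum>j<p. \<bar>A i j\<bar> * \<bar>x j\<bar> powr q))"
      by (intro sum_mono row) auto
    also have "\<dots> = K powr (q-1) * (\<Sum>j<p. (\<Sum>i<p. \<bar>A i j\<bar>) * \<bar>x j\<bar> powr q)"
      by (simp only: sum_distrib_left[symmetric] sum_distrib_right) (rule arg_cong[where f="\<lambda>t. K powr (q-1) * t"], rule sum.swap)
    also have "\<dots> \<le> K powr (q-1) * (\<Sum>j<p. K * \<bar>x j\<bar> powr q)"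
      by (intro mult_left_mono sum_mono mult_right_mono cols) auto
    also have "\<dots> = (K powr (q-1) * K) * Sx" unfolding Sx_def by (simp add: sum_distrib_left mult.assoc)
    also have "K powr (q-1) * K = K powr q"
    proof (cases "K = 0")
      case False
      have "K powr q = K powr ((q-1)+1)" by simp
      also have "\<dots> = K powr (q-1) * K powr 1" by (rule powr_add)
      finally show ?thesis using K0 by simp
    qed simp
    finally have le: "(\<Sum>i<p. \<bar>mat_vec p A x i\<bar> powr q) \<le> K powr q * Sx" .
    have "(\<Sum>i<p. \<bar>mat_vec p A x i\<bar> powr q) powr (1/q) \<le> (K powr q * Sx) powr (1/q)"
      using q le by (intro powr_mono2) (auto intro!: sum_nonneg)
    also have "\<dots> = K * Sx powr (1/q)"
      using K0 Sx q by (simp add: powr_mult powr_powr)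
    finally show ?thesis using real Sx q unfolding lw_norm_def Sx_def by simp
  next
    case MInf then show ?thesis using w by simp
  qed
qed

lemma op_norm_le:
  fixes A :: "nat \<Rightarrow> nat \<Rightarrow> real" and K :: real and w :: ereal
  assumes p: "p > 0" and w: "w \<ge> 1"
    and rows: "\<And>i. i < p \<Longrightarrow> (\<Sum>j<p. \<bar>A i j\<bar>) \<le> K"
    and cols: "\<And>j. j < p \<Longrightarrow> (\<Sum>i<p. \<bar>A i j\<bar>) \<le> K"
  shows "op_norm p w A \<le> K \<and> 0 \<le> op_norm p w A"
proof -
  define X where "X = {x::nat\<Rightarrow>real. (\<forall>j\<ge>p. x j = 0) \<and> (\<exists>j<p. x j \<noteq> 0)}"
  define f where "f = (\<lambda>x. lw_norm p w (mat_vec p A x) / lw_norm p w x)"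
  have fle: "f x \<le> K \<and> 0 \<le> f x" if "x \<in> X" for x
  proof -
    from that obtain j0 where j0: "j0 < p" "x j0 \<noteq> 0" unfolding X_def by auto
    have "lw_norm p w (mat_vec p A x) \<le> K * lw_norm p w x \<and> lw_norm p w x > 0"
      by (rule lw_ratio_le[of w p A K j0 x]) (use w rows cols j0 in auto)
    then have h: "lw_norm p w (mat_vec p A x) \<le> K * lw_norm p w x" "lw_norm p w x > 0" by auto
    have "0 \<le> lw_norm p w (mat_vec p A x)"
    proof (cases "w = \<infinity>")
      case True
      have "0 \<le> \<bar>mat_vec p A x 0\<bar>" by simp
      also have "\<dots> \<le> Max ((\<lambda>j. \<bar>mat_vec p A x j\<bar>) ` {..<p})" using p by (intro Max_ge) auto
      finally show ?thesis unfolding lw_norm_def using True by simp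
    qed (simp add: lw_norm_def)
    then show ?thesis unfolding f_def using h by (simp add: divide_le_eq)
  qed
  define e where "e = (\<lambda>j::nat. if j = 0 then 1 else (0::real))"
  have eX: "e \<in> X" unfolding X_def e_def using p by auto
  have ne: "X \<noteq> {}" using eX by auto
  have "op_norm p w A = (SUP x\<in>X. f x)" unfolding op_norm_def X_def f_def by simp
  moreover have "(SUP x\<in>X. f x) \<le> K" using ne fle by (intro cSUP_least) auto
  moreover have "0 \<le> (SUP x\<in>X. f x)"
    using fle eX by (intro cSUP_upper2[OF _ eX]) (auto intro!: bdd_aboveI2)
  ultimately show ?thesis by simp
qed




lemma entry_bound:
  fixes s0 sg z a b :: real
  assumes "a \<ge> 0" "b \<ge> 0" "\<bar>sg\<bar> \<le> 1" "\<bar>s0\<bar> \<le> 1"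
  shows "\<bar>(if \<bar>s0+z\<bar> > a+b then s0+z else 0) - sg\<bar> \<le>
    (if sg \<noteq> 0 then 2*(a+b) else 0) + ((if \<bar>s0-sg\<bar> > a then 3+(a+b) else 0)
      + (if \<bar>z\<bar> > b then 3+\<bar>z\<bar> else 0))"
  using assms by (auto split: if_splits simp: abs_if)

lemma card_col:
  assumes G: "G0 p s Sg" and sym: "\<And>i j. Sg i j = Sg j i" and i: "i < p"
  shows "card {j\<in>{..<p}. Sg i j \<noteq> 0} \<le> s + 1"
proof -
  have "{j\<in>{..<p}. Sg i j \<noteq> 0} \<subseteq> insert i {j. j < p \<and> j \<noteq> i \<and> Sg j i \<noteq> 0}"
    using sym by auto
  then have "card {j\<in>{..<p}. Sg i j \<noteq> 0} \<le> card (insert i {j. j < p \<and> j \<noteq> i \<and> Sg j i \<noteq> 0})"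
    by (intro card_mono) auto
  also have "\<dots> \<le> card {j. j < p \<and> j \<noteq> i \<and> Sg j i \<noteq> 0} + 1"
    by (simp add: card_insert_if)
  also have "card {j. j < p \<and> j \<noteq> i \<and> Sg j i \<noteq> 0} \<le> s" using G i unfolding G0_def by auto
  finally show ?thesis by simp
qed

lemma row_bound:
  fixes S0 Sg Z :: "nat \<Rightarrow> nat \<Rightarrow> real" and a b :: real
  assumes ab: "a \<ge> 0" "b \<ge> 0"
    and bd: "\<And>i j. i < p \<Longrightarrow> j < p \<Longrightarrow> \<bar>Sg i j\<bar> \<le> 1 \<and> \<bar>S0 i j\<bar> \<le> 1"
    and sym: "\<And>i j. Sg i j = Sg j i" and G: "G0 p s Sg" and i: "i < p"
  shows "(\<Sum>j<p. \<bar>(if \<bar>S0 i j + Z i j\<bar> > a+b then S0 i j + Z i j else 0) - Sg i j\<bar>)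
    \<le> 2*(a+b)*(real s+1) + (\<Sum>j<p. (if \<bar>S0 i j - Sg i j\<bar> > a then 3+(a+b) else 0)
      + (if \<bar>Z i j\<bar> > b then 3+\<bar>Z i j\<bar> else 0))"
proof -
  have "(\<Sum>j<p. \<bar>(if \<bar>S0 i j + Z i j\<bar> > a+b then S0 i j + Z i j else 0) - Sg i j\<bar>)
     \<le> (\<Sum>j<p. (if Sg i j \<noteq> 0 then 2*(a+b) else 0) + ((if \<bar>S0 i j - Sg i j\<bar> > a then 3+(a+b) else 0)
      + (if \<bar>Z i j\<bar> > b then 3+\<bar>Z i j\<bar> else 0)))"
    using bd i by (intro sum_mono entry_bound[OF ab]) auto
  also have "\<dots> = (\<Sum>j<p. (if Sg i j \<noteq> 0 then 2*(a+b) else 0)) + (\<Sum>j<p. (if \<bar>S0 i j - Sg i j\<bar> > a then 3+(a+b) else 0)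
      + (if \<bar>Z i j\<bar> > b then 3+\<bar>Z i j\<bar> else 0))"
    by (rule sum.distrib)
  also have "(\<Sum>j<p. (if Sg i j \<noteq> 0 then 2*(a+b) else 0)) = real (card {j\<in>{..<p}. Sg i j \<noteq> 0}) * (2*(a+b))"
    by (simp add: sum.inter_filter[symmetric])
  also have "\<dots> \<le> (real s + 1) * (2*(a+b))"
    using card_col[OF G sym i] ab by (intro mult_right_mono) auto
  finally show ?thesis by (simp add: algebra_simps)
qed




lemma nd_exp:
  fixes \<sigma> b x :: real assumes s: "\<sigma> > 0"
  shows "normal_density 0 \<sigma> x * exp (3*(x\<^sup>2-b\<^sup>2)/(8*\<sigma>\<^sup>2)) = 2 * exp (-3*b\<^sup>2/(8*\<sigma>\<^sup>2)) * normal_density 0 (2*\<sigma>) x"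
proof -
  have sq: "sqrt (2 * pi * (2*\<sigma>)\<^sup>2) = 2 * sqrt (2*pi*\<sigma>\<^sup>2)"
  proof -
    have "2 * pi * (2*\<sigma>)\<^sup>2 = 2\<^sup>2 * (2*pi*\<sigma>\<^sup>2)" by (simp add: power2_eq_square)
    moreover have "sqrt (2\<^sup>2 * (2*pi*\<sigma>\<^sup>2)) = sqrt (2\<^sup>2) * sqrt (2*pi*\<sigma>\<^sup>2)" by (rule real_sqrt_mult)
    ultimately show ?thesis by simp
  qed
  have e: "exp (- x\<^sup>2 / (2 * \<sigma>\<^sup>2)) * exp (3*(x\<^sup>2-b\<^sup>2)/(8*\<sigma>\<^sup>2)) = exp (-3*b\<^sup>2/(8*\<sigma>\<^sup>2)) * exp (- x\<^sup>2 / (2 * (2*\<sigma>)\<^sup>2))"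
  proof -
    have "- x\<^sup>2 / (2 * \<sigma>\<^sup>2) + 3*(x\<^sup>2-b\<^sup>2)/(8*\<sigma>\<^sup>2) = -3*b\<^sup>2/(8*\<sigma>\<^sup>2) + (- x\<^sup>2 / (2 * (2*\<sigma>)\<^sup>2))"
      using s by (simp add: field_simps power2_eq_square)
    then show ?thesis by (simp add: exp_add[symmetric])
  qed
  have p0: "sqrt (2*pi*\<sigma>\<^sup>2) > 0" using s by simp
  have "normal_density 0 \<sigma> x * exp (3*(x\<^sup>2-b\<^sup>2)/(8*\<sigma>\<^sup>2)) = 1 / sqrt (2*pi*\<sigma>\<^sup>2) * (exp (- x\<^sup>2 / (2 * \<sigma>\<^sup>2)) * exp (3*(x\<^sup>2-b\<^sup>2)/(8*\<sigma>\<^sup>2)))"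
    unfolding normal_density_def by simp
  also have "\<dots> = 1 / sqrt (2*pi*\<sigma>\<^sup>2) * (exp (-3*b\<^sup>2/(8*\<sigma>\<^sup>2)) * exp (- x\<^sup>2 / (2 * (2*\<sigma>)\<^sup>2)))"
    by (simp only: e)
  also have "\<dots> = 2 * exp (-3*b\<^sup>2/(8*\<sigma>\<^sup>2)) * (1 / sqrt (2 * pi * (2*\<sigma>)\<^sup>2) * exp (- (x - 0)\<^sup>2 / (2 * (2*\<sigma>)\<^sup>2)))"
    unfolding sq using p0 by simp
  finally show ?thesis unfolding normal_density_def .
qed

lemma gauss_int:
  fixes \<sigma> b :: real assumes s: "\<sigma> > 0"
  shows "(\<integral>\<^sup>+x. ennreal ((36 + 4*x\<^sup>2) * exp (3*(x\<^sup>2-b\<^sup>2)/(8*\<sigma>\<^sup>2))) \<partial>(density lborel (normal_density 0 \<sigma>)))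
    = ennreal (2 * exp (-3*b\<^sup>2/(8*\<sigma>\<^sup>2)) * (36 + 16*\<sigma>\<^sup>2))"
proof -
  define c where "c = 2 * exp (-3*b\<^sup>2/(8*\<sigma>\<^sup>2))"
  have hb: "has_bochner_integral lborel (\<lambda>x. c * (36 * normal_density 0 (2*\<sigma>) x + 4 * (normal_density 0 (2*\<sigma>) x * (x - 0)^(2*1))))
       (c * (36 * 1 + 4 * (fact (2 * 1) / ((2 / (2*\<sigma>)\<^sup>2)^1 * fact 1))))"
    apply (intro has_bochner_integral_mult_right has_bochner_integral_add)
     apply (use s in \<open>simp add: has_bochner_integral_iff\<close>)
    apply (rule normal_moment_even) using s by simp
  have val: "c * (36 * 1 + 4 * (fact (2 * 1) / ((2 / (2*\<sigma>)\<^sup>2)^1 * fact 1))) = c * (36 + 16*\<sigma>\<^sup>2)"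
    using s by (simp add: power2_eq_square)
  have pw: "ennreal (normal_density 0 \<sigma> x) * ennreal ((36 + 4*x\<^sup>2) * exp (3*(x\<^sup>2-b\<^sup>2)/(8*\<sigma>\<^sup>2)))
     = ennreal (c * (36 * normal_density 0 (2*\<sigma>) x + 4 * (normal_density 0 (2*\<sigma>) x * (x - 0)^(2*1))))" for x
  proof -
    have "normal_density 0 \<sigma> x * ((36 + 4*x\<^sup>2) * exp (3*(x\<^sup>2-b\<^sup>2)/(8*\<sigma>\<^sup>2)))
      = (36 + 4*x\<^sup>2) * (normal_density 0 \<sigma> x * exp (3*(x\<^sup>2-b\<^sup>2)/(8*\<sigma>\<^sup>2)))" by simp
    also have "\<dots> = c * (36 * normal_density 0 (2*\<sigma>) x + 4 * (normal_density 0 (2*\<sigma>) x * (x - 0)^(2*1)))"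
      unfolding nd_exp[OF s] c_def by (simp add: algebra_simps power2_eq_square)
    finally show ?thesis by (simp add: ennreal_mult[symmetric])
  qed
  have "(\<integral>\<^sup>+x. ennreal ((36 + 4*x\<^sup>2) * exp (3*(x\<^sup>2-b\<^sup>2)/(8*\<sigma>\<^sup>2))) \<partial>(density lborel (normal_density 0 \<sigma>)))
     = (\<integral>\<^sup>+x. ennreal (normal_density 0 \<sigma> x) * ennreal ((36 + 4*x\<^sup>2) * exp (3*(x\<^sup>2-b\<^sup>2)/(8*\<sigma>\<^sup>2))) \<partial>lborel)"
    by (rule nn_integral_density) auto
  also have "\<dots> = (\<integral>\<^sup>+x. ennreal (c * (36 * normal_density 0 (2*\<sigma>) x + 4 * (normal_density 0 (2*\<sigma>) x * (x - 0)^(2*1)))) \<partial>lborel)"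
    by (simp only: pw)
  also have "\<dots> = ennreal (c * (36 + 16*\<sigma>\<^sup>2))"
    apply (subst nn_integral_eq_integral)
      apply (rule integrable.intros[OF hb])
     apply (rule AE_I2) apply (unfold c_def)
     apply (intro mult_nonneg_nonneg add_nonneg_nonneg; simp)
    apply (subst has_bochner_integral_integral_eq[OF hb[unfolded c_def]])
    using val unfolding c_def by (simp only:)
  finally show ?thesis unfolding c_def .
qed




lemma divle: "(0::real) \<le> x \<Longrightarrow> 1 \<le> y \<Longrightarrow> x / y \<le> x"
proof -
  assume a: "0 \<le> x" "1 \<le> y"
  then have "x \<le> x * y" using mult_left_mono[of 1 y x] by simp
  then show ?thesis using a by (simp add: pos_divide_le_eq)
qed

lemma final_arith:
  fixes \<gamma> C1 \<epsilon> lp L \<tau> a b vv :: real and n p s :: nat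
  assumes g: "\<gamma> > 0" and C1: "C1 > 0" and e: "0 < \<epsilon>" "\<epsilon> \<le> 1" and lp: "lp \<ge> 1/2" and L: "L \<ge> 1/5"
    and n: "n \<ge> 1" "n \<le> p" and s: "s \<ge> 1"
    and a: "a\<^sup>2 = \<gamma>\<^sup>2 * lp / n" and b: "b\<^sup>2 = 32 * L * lp / (real n ^ 2 * \<epsilon>\<^sup>2)"
    and tau: "\<tau> = a + b" and ab: "a \<ge> 0" "b \<ge> 0" and vv: "vv = 2 * L / (real n ^ 2 * \<epsilon>\<^sup>2)"
  shows "8*\<tau>\<^sup>2*(real s+1)\<^sup>2 + 4*C1*(3+\<tau>)\<^sup>2/real p^4 + 4*(36+16* vv)/real p^2
    \<le> ((10*\<gamma>\<^sup>2+64)*(32+8*C1) + 720*C1 + 1696) * (real s)\<^sup>2 * lp * L / (real n * \<epsilon>\<^sup>2)"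
proof -
  define T0 where "T0 = lp * L / (real n * \<epsilon>\<^sup>2)"
  have n0: "real n \<ge> 1" using n by simp
  have p0: "real p \<ge> real n" using n by simp
  have e2: "0 < \<epsilon>\<^sup>2" "\<epsilon>\<^sup>2 \<le> 1" using e by (auto simp: power_le_one)
  have T0pos: "T0 > 0" unfolding T0_def using lp L n0 e2 by auto
  have T0low: "1 / real n \<le> 10 * T0"
  proof -
    have "1 / real n = (1/2) * (1/5) * 10 / (real n * 1)" by simp
    also have "\<dots> \<le> lp * L * 10 / (real n * \<epsilon>\<^sup>2)"
      using lp L n0 e2 by (intro frac_le mult_right_mono mult_mono mult_left_mono) auto
    finally show ?thesis unfolding T0_def by (simp add: ac_simps)
  qed
  have ia: "1 / real p \<le> 10 * T0"
    using T0low n0 p0 by (smt (verit) frac_le)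
  have a2: "a\<^sup>2 \<le> 5 * \<gamma>\<^sup>2 * T0"
  proof -
    have "a\<^sup>2 = \<gamma>\<^sup>2 * lp * (1/5) * 5 / (real n * 1)" using a by simp
    also have "\<dots> \<le> \<gamma>\<^sup>2 * lp * L * 5 / (real n * \<epsilon>\<^sup>2)"
      using lp L n0 e2 g by (intro frac_le mult_right_mono mult_mono mult_left_mono) auto
    finally show ?thesis unfolding T0_def by (simp add: ac_simps)
  qed
  have b2: "b\<^sup>2 \<le> 32 * T0"
  proof -
    have "b\<^sup>2 = 32 * L * lp / (real n ^ 2 * \<epsilon>\<^sup>2)" by (rule b)
    also have "\<dots> \<le> 32 * L * lp / (real n * \<epsilon>\<^sup>2)"
      using lp L n0 e2 by (intro divide_left_mono mult_right_mono) (auto simp: power2_eq_square)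
    finally show ?thesis unfolding T0_def by (simp add: field_simps)
  qed
  have vv2: "vv \<le> 4 * T0"
  proof -
    have "vv \<le> 2 * L / (real n * \<epsilon>\<^sup>2)"
      unfolding vv using lp L n0 e2 by (intro divide_left_mono mult_right_mono) (auto simp: power2_eq_square)
    also have "\<dots> \<le> 4 * T0" unfolding T0_def using lp L n0 e2
      by (simp add: field_simps)
    finally show ?thesis .
  qed
  have t2: "\<tau>\<^sup>2 \<le> (10*\<gamma>\<^sup>2+64) * T0"
  proof -
    have "\<tau>\<^sup>2 \<le> 2*a\<^sup>2 + 2*b\<^sup>2" unfolding tau using zero_le_square[of "a-b"] by (simp add: power2_eq_square algebra_simps)
    then show ?thesis using a2 b2 by (simp add: algebra_simps)
  qed
  have s2: "(real s + 1)\<^sup>2 \<le> 4 * (real s)\<^sup>2"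
  proof -
    have "real s + 1 \<le> 2 * real s" using s by simp
    from power_mono[OF this, of 2] show ?thesis by (simp add: power_mult_distrib)
  qed
  have ss: "1 \<le> (real s)\<^sup>2" using s by simp
  have tt0: "0 \<le> \<tau>\<^sup>2" by simp
  have term1: "8*\<tau>\<^sup>2*(real s+1)\<^sup>2 \<le> 32 * (real s)\<^sup>2 * ((10*\<gamma>\<^sup>2+64) * T0)"
  proof -
    have "8*\<tau>\<^sup>2*(real s+1)\<^sup>2 \<le> 8*\<tau>\<^sup>2*(4 * (real s)\<^sup>2)" using s2 by (intro mult_left_mono) auto
    also have "\<dots> \<le> 8*((10*\<gamma>\<^sup>2+64) * T0)*(4 * (real s)\<^sup>2)" using t2 by (intro mult_right_mono mult_left_mono) auto
    finally show ?thesis by simp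
  qed
  have pp: "real p ^ 4 \<ge> real p" "real p ^ 2 \<ge> real p" "real p \<ge> 1" using n0 p0 by (auto simp: power_increasing[of 1 _ "real p", simplified])
  have term2: "4*C1*(3+\<tau>)\<^sup>2/real p^4 \<le> 720*C1*T0 + 8*C1*((10*\<gamma>\<^sup>2+64) * T0)"
  proof -
    have "(3+\<tau>)\<^sup>2 \<le> 18 + 2*\<tau>\<^sup>2" using zero_le_square[of "3-\<tau>"] by (simp add: power2_eq_square algebra_simps)
    have "4*C1*(3+\<tau>)\<^sup>2/real p^4 \<le> 4*C1*(18 + 2*\<tau>\<^sup>2)/real p^4"
      using \<open>(3+\<tau>)\<^sup>2 \<le> 18 + 2*\<tau>\<^sup>2\<close> C1 pp by (intro divide_right_mono mult_left_mono) auto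
    also have "\<dots> = 72*C1 / real p^4 + 8*C1*\<tau>\<^sup>2 / real p^4" by (simp add: add_divide_distrib[symmetric] algebra_simps)
    also have "72*C1 / real p^4 \<le> 72*C1 / real p" using C1 pp by (intro divide_left_mono) auto
    also have "8*C1*\<tau>\<^sup>2 / real p^4 \<le> 8*C1*\<tau>\<^sup>2" using C1 pp tt0 by (intro divle) auto
    also have "72*C1 / real p = 72*C1 * (1 / real p)" by simp
    also have "\<dots> \<le> 72*C1*(10*T0)" using ia C1 by (intro mult_left_mono) auto
    also have "8*C1*\<tau>\<^sup>2 \<le> 8*C1*((10*\<gamma>\<^sup>2+64) * T0)" using t2 C1 by (intro mult_left_mono) auto
    finally show ?thesis by simp
  qed
  have term3: "4*(36+16* vv)/real p^2 \<le> 1440*T0 + 256*T0"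
  proof -
    have vv0: "vv \<ge> 0" unfolding vv using L e2 by auto
    have "4*(36+16* vv)/real p^2 = 144 / real p^2 + 64* vv / real p^2" by (simp add: add_divide_distrib[symmetric] algebra_simps)
    also have "144 / real p^2 \<le> 144 / real p" using pp by (intro divide_left_mono) auto
    also have "64* vv / real p^2 \<le> 64* vv" using pp vv0 by (intro divle) auto
    also have "144 / real p = 144 * (1 / real p)" by simp
    also have "\<dots> \<le> 144 * (10 * T0)" using ia by (intro mult_left_mono) auto
    also have "64* vv \<le> 64 * (4*T0)" using vv2 by simp
    finally show ?thesis by simp
  qed
  have "8*\<tau>\<^sup>2*(real s+1)\<^sup>2 + 4*C1*(3+\<tau>)\<^sup>2/real p^4 + 4*(36+16* vv)/real p^2
     \<le> 32 * (real s)\<^sup>2 * ((10*\<gamma>\<^sup>2+64) * T0) + (720*C1*T0 + 8*C1*((10*\<gamma>\<^sup>2+64) * T0)) + (1440*T0 + 256*T0)"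
    using term1 term2 term3 by linarith
  also have "\<dots> \<le> ((10*\<gamma>\<^sup>2+64)*(32+8*C1) + 720*C1 + 1696) * (real s)\<^sup>2 * T0"
  proof -
    have X: "0 \<le> (720*C1 + 8*C1*(10*\<gamma>\<^sup>2+64) + 1696) * T0" using C1 T0pos g by auto
    have "(720*C1 + 8*C1*(10*\<gamma>\<^sup>2+64) + 1696) * T0 \<le> (720*C1 + 8*C1*(10*\<gamma>\<^sup>2+64) + 1696) * T0 * (real s)\<^sup>2"
      using X ss by (simp add: mult_le_cancel_left1)
    then show ?thesis by (simp add: algebra_simps)
  qed
  finally show ?thesis unfolding T0_def by (simp add: field_simps)
qed




lemma sq_sum_le: "(u + v)\<^sup>2 \<le> 2 * u\<^sup>2 + 2*(v::real)\<^sup>2"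
  using zero_le_square[of "u-v"] by (simp add: power2_eq_square algebra_simps)

lemma pointwise:
  fixes S0 Sg Z ind :: "nat \<Rightarrow> nat \<Rightarrow> real" and a b \<sigma> :: real and w :: ereal
  assumes p: "p > 0" and w: "w \<ge> 1" and ab: "a \<ge> 0" "b \<ge> 0"
    and bd: "\<And>i j. i < p \<Longrightarrow> j < p \<Longrightarrow> \<bar>Sg i j\<bar> \<le> 1 \<and> \<bar>S0 i j\<bar> \<le> 1"
    and symSg: "\<And>i j. Sg i j = Sg j i" and symS0: "\<And>i j. S0 i j = S0 j i"
    and symZ: "\<And>i j. Z i j = Z j i" and G: "G0 p s Sg"
    and ind: "\<And>i j. ind i j = (if \<bar>S0 i j - Sg i j\<bar> > a then 1 else 0)"
  shows "(op_norm p w (\<lambda>i j. (if \<bar>S0 i j + Z i j\<bar> > a+b then S0 i j + Z i j else 0) - Sg i j))\<^sup>2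
    \<le> 8*(a+b)\<^sup>2*(real s+1)\<^sup>2 + (\<Sum>i<p. \<Sum>j<p. 4*(real p)\<^sup>2*(3+(a+b))\<^sup>2 * ind i j
        + 2*(real p)\<^sup>2 * ((36 + 4*(Z i j)\<^sup>2) * exp (3*((Z i j)\<^sup>2-b\<^sup>2)/(8*\<sigma>\<^sup>2))))"
proof -
  define E where "E = (\<lambda>i j. (if \<bar>S0 i j + Z i j\<bar> > a+b then S0 i j + Z i j else 0) - Sg i j)"
  define X where "X = (\<lambda>i j. (if \<bar>S0 i j - Sg i j\<bar> > a then 3+(a+b) else 0)
      + (if \<bar>Z i j\<bar> > b then 3+\<bar>Z i j\<bar> else 0))"
  define Y where "Y = (\<Sum>i<p. \<Sum>j<p. X i j)"
  define K where "K = 2*(a+b)*(real s+1) + Y"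
  have X0: "X i j \<ge> 0" for i j unfolding X_def using ab by auto
  have symE: "E i j = E j i" for i j unfolding E_def using symSg symS0 symZ by simp
  have rows: "(\<Sum>j<p. \<bar>E i j\<bar>) \<le> K" if i: "i < p" for i
  proof -
    have "(\<Sum>j<p. \<bar>E i j\<bar>) \<le> 2*(a+b)*(real s+1) + (\<Sum>j<p. X i j)"
      unfolding E_def X_def by (rule row_bound[OF ab bd symSg G i])
    also have "(\<Sum>j<p. X i j) \<le> Y" unfolding Y_def
      using i X0 by (intro member_le_sum[where f="\<lambda>i. \<Sum>j<p. X i j"]) (auto intro: sum_nonneg)
    finally show ?thesis unfolding K_def by simp
  qed
  have cols: "(\<Sum>i<p. \<bar>E i j\<bar>) \<le> K" if j: "j < p" for j
    using rows[OF j] by (simp add: symE)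
  have opn: "op_norm p w E \<le> K \<and> 0 \<le> op_norm p w E"
    by (rule op_norm_le[OF p w]) (use rows cols in auto)
  have "(op_norm p w E)\<^sup>2 \<le> K\<^sup>2" using opn by (intro power_mono) auto
  also have "\<dots> \<le> 2*(2*(a+b)*(real s+1))\<^sup>2 + 2*Y\<^sup>2" unfolding K_def by (rule sq_sum_le)
  also have "Y\<^sup>2 \<le> (real p)\<^sup>2 * (\<Sum>i<p. \<Sum>j<p. (X i j)\<^sup>2)"
  proof -
    have "Y = (\<Sum>(i,j)\<in>{..<p}\<times>{..<p}. X i j)" unfolding Y_def by (rule sum.cartesian_product)
    then have "Y\<^sup>2 \<le> (\<Sum>ij\<in>{..<p}\<times>{..<p}. (case ij of (i,j) \<Rightarrow> X i j)\<^sup>2) * card ({..<p}\<times>{..<p})"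
      using sum_squared_le_sum_of_squares[of "\<lambda>ij. case ij of (i,j) \<Rightarrow> X i j" "{..<p}\<times>{..<p}"] by simp
    also have "(\<Sum>ij\<in>{..<p}\<times>{..<p}. (case ij of (i,j) \<Rightarrow> X i j)\<^sup>2) = (\<Sum>i<p. \<Sum>j<p. (X i j)\<^sup>2)"
      by (subst sum.cartesian_product) (simp add: case_prod_unfold)
    finally show ?thesis by (simp add: power2_eq_square algebra_simps)
  qed
  also have "(\<Sum>i<p. \<Sum>j<p. (X i j)\<^sup>2) \<le> (\<Sum>i<p. \<Sum>j<p. 2*(3+(a+b))\<^sup>2 * ind i j
        + ((36 + 4*(Z i j)\<^sup>2) * exp (3*((Z i j)\<^sup>2-b\<^sup>2)/(8*\<sigma>\<^sup>2))))"
  proof (intro sum_mono)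
    fix i j
    define u where "u = (if \<bar>S0 i j - Sg i j\<bar> > a then 3+(a+b) else 0)"
    define v where "v = (if \<bar>Z i j\<bar> > b then 3+\<bar>Z i j\<bar> else 0)"
    have "(X i j)\<^sup>2 \<le> 2 * u\<^sup>2 + 2 * v\<^sup>2" unfolding X_def u_def v_def by (rule sq_sum_le)
    also have "2 * u\<^sup>2 = 2*(3+(a+b))\<^sup>2 * ind i j" unfolding u_def ind by simp
    also have "2 * v\<^sup>2 \<le> (36 + 4*(Z i j)\<^sup>2) * exp (3*((Z i j)\<^sup>2-b\<^sup>2)/(8*\<sigma>\<^sup>2))"
    proof (cases "\<bar>Z i j\<bar> > b")
      case True
      have "b\<^sup>2 \<le> (Z i j)\<^sup>2" using True ab by (metis abs_le_square_iff abs_of_nonneg less_le)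
      then have "0 \<le> 3*((Z i j)\<^sup>2-b\<^sup>2)/(8*\<sigma>\<^sup>2)" by simp
      then have e1: "1 \<le> exp (3*((Z i j)\<^sup>2-b\<^sup>2)/(8*\<sigma>\<^sup>2))" by simp
      have "2 * v\<^sup>2 \<le> 36 + 4*(Z i j)\<^sup>2" unfolding v_def using True sq_sum_le[of 3 "\<bar>Z i j\<bar>"] by simp
      also have "\<dots> \<le> (36 + 4*(Z i j)\<^sup>2) * exp (3*((Z i j)\<^sup>2-b\<^sup>2)/(8*\<sigma>\<^sup>2))"
        using mult_left_mono[OF e1, of "36 + 4*(Z i j)\<^sup>2"] by simp
      finally show ?thesis .
    qed (simp add: v_def)
    finally show "(X i j)\<^sup>2 \<le> 2*(3+(a+b))\<^sup>2 * ind i j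
        + ((36 + 4*(Z i j)\<^sup>2) * exp (3*((Z i j)\<^sup>2-b\<^sup>2)/(8*\<sigma>\<^sup>2)))" by simp
  qed
  finally have "(op_norm p w E)\<^sup>2 \<le> 2*(2*(a+b)*(real s+1))\<^sup>2 + 2*((real p)\<^sup>2 * (\<Sum>i<p. \<Sum>j<p. 2*(3+(a+b))\<^sup>2 * ind i j
        + ((36 + 4*(Z i j)\<^sup>2) * exp (3*((Z i j)\<^sup>2-b\<^sup>2)/(8*\<sigma>\<^sup>2)))))"
    by (simp add: mult_left_mono)
  also have "\<dots> = 8*(a+b)\<^sup>2*(real s+1)\<^sup>2 + (\<Sum>i<p. \<Sum>j<p. 4*(real p)\<^sup>2*(3+(a+b))\<^sup>2 * ind i j
        + 2*(real p)\<^sup>2 * ((36 + 4*(Z i j)\<^sup>2) * exp (3*((Z i j)\<^sup>2-b\<^sup>2)/(8*\<sigma>\<^sup>2))))"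
    by (simp add: sum_distrib_left algebra_simps power2_eq_square)
  finally show ?thesis unfolding E_def .
qed




lemma nn_fst:
  assumes P: "prob_space M2" and f: "f \<in> borel_measurable M1"
  shows "(\<integral>\<^sup>+\<omega>. f (fst \<omega>) \<partial>(M1 \<Otimes>\<^sub>M M2)) = (\<integral>\<^sup>+x. f x \<partial>M1)"
proof -
  have d: "distr (M1 \<Otimes>\<^sub>M M2) M1 fst = M1" by (rule prob_space.distr_pair_fst[OF P])
  have "(\<integral>\<^sup>+x. f x \<partial>M1) = (\<integral>\<^sup>+x. f x \<partial>distr (M1 \<Otimes>\<^sub>M M2) M1 fst)" by (simp add: d)
  also have "\<dots> = (\<integral>\<^sup>+\<omega>. f (fst \<omega>) \<partial>(M1 \<Otimes>\<^sub>M M2))"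
    by (rule nn_integral_distr) (auto simp: d f)
  finally show ?thesis by simp
qed

lemma nn_snd:
  assumes P1: "prob_space M1" and P2: "prob_space M2" and f: "f \<in> borel_measurable M2"
  shows "(\<integral>\<^sup>+\<omega>. f (snd \<omega>) \<partial>(M1 \<Otimes>\<^sub>M M2)) = (\<integral>\<^sup>+x. f x \<partial>M2)"
proof -
  interpret pair_sigma_finite M1 M2
    unfolding pair_sigma_finite_def using P1 P2 by (simp add: prob_space_imp_sigma_finite)
  have "(\<integral>\<^sup>+y. \<integral>\<^sup>+x. f (snd (x,y)) \<partial>M1 \<partial>M2) = integral\<^sup>N (M1 \<Otimes>\<^sub>M M2) (\<lambda>\<omega>. f (snd \<omega>))"
    by (rule nn_integral_snd) (rule measurable_compose[OF measurable_snd f])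
  moreover have "(\<integral>\<^sup>+y. \<integral>\<^sup>+x. f (snd (x,y)) \<partial>M1 \<partial>M2) = (\<integral>\<^sup>+y. f y \<partial>M2)"
    using prob_space.emeasure_space_1[OF P1] by (simp add: nn_integral_const)
  ultimately show ?thesis by simp
qed

lemma nn_comp:
  assumes P: "prob_space N" and k: "k \<in> I" and g: "g \<in> borel_measurable N"
  shows "(\<integral>\<^sup>+z. g (z k) \<partial>(PiM I (\<lambda>_. N))) = (\<integral>\<^sup>+x. g x \<partial>N)"
proof -
  interpret product_prob_space "\<lambda>_. N" I by (rule product_prob_spaceI) (rule P)
  have d: "distr (PiM I (\<lambda>_. N)) N (\<lambda>\<omega>. \<omega> k) = N" by (rule PiM_component[OF k])
  have "(\<integral>\<^sup>+x. g x \<partial>N) = (\<integral>\<^sup>+x. g x \<partial>distr (PiM I (\<lambda>_. N)) N (\<lambda>\<omega>. \<omega> k))" by (simp add: d)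
  also have "\<dots> = (\<integral>\<^sup>+z. g (z k) \<partial>(PiM I (\<lambda>_. N)))"
    by (rule nn_integral_distr) (auto simp: d g k)
  finally show ?thesis by simp
qed




lemma alg1: "(q::real) > 0 \<Longrightarrow> q*(q*(4*q\<^sup>2*X*(C/q^8))) = 4*C*X/q^4"
  by (simp add: field_simps power2_eq_square power_numeral_reduce)
lemma alg2: "(q::real) > 0 \<Longrightarrow> q*(q*(2*q\<^sup>2*(2 * (1 / q ^ 6) * Y))) = 4*Y/q^2"
  by (simp add: field_simps power2_eq_square power_numeral_reduce)

lemma main:
  fixes \<gamma> C1 t0 :: real and p n s :: nat and \<epsilon> \<delta> :: real and D :: "(nat \<Rightarrow> real) measure" and w :: ereal
  assumes g: "\<gamma> > 0" and C1: "C1 > 0" and p2: "2 \<le> p" and n1: "1 \<le> n" and np: "n \<le> p" and s1: "1 \<le> s"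
    and e: "0 < \<epsilon>" "\<epsilon> \<le> 1" and d: "0 < \<delta>" "\<delta> \<le> 1" and w: "1 \<le> w"
    and PD: "prob_space D" and setsD: "sets D = sets (PiM {..<p} (\<lambda>_. borel))"
    and AEn: "AE x in D. (\<Sum>j<p. (x j)\<^sup>2) \<le> 1"
    and G: "G0 p s (cov D)"
    and conc: "\<forall>i<p. \<forall>j<p. \<forall>t. 0 < t \<longrightarrow> t \<le> t0 \<longrightarrow>
        measure (PiM {..<n} (\<lambda>_. D))
          {xs \<in> space (PiM {..<n} (\<lambda>_. D)). \<bar>sample_cov n xs i j - cov D i j\<bar> > t}
        \<le> C1 * exp (- 8 * real n * t\<^sup>2 / \<gamma>\<^sup>2)"
    and at0: "\<gamma> * sqrt (ln (real p) / real n) \<le> t0"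
  shows "(\<integral>\<^sup>+ \<omega>. ennreal ((op_norm p w
          (\<lambda>i j. dp_threshold n (dp_tau \<gamma> p n \<epsilon> \<delta>) (fst \<omega>) (snd \<omega>) i j - cov D i j))\<^sup>2)
       \<partial>(PiM {..<n} (\<lambda>_. D) \<Otimes>\<^sub>M noise_measure p (dp_sigma1 n \<epsilon> \<delta>)))
    \<le> ennreal (((10*\<gamma>\<^sup>2+64)*(32+8*C1) + 720*C1 + 1696) * (real s)\<^sup>2 * ln (real p) * ln (1.25 / \<delta>) / (real n * \<epsilon>\<^sup>2))"
proof -
  define lp where "lp = ln (real p)"
  define L where "L = ln (1.25 / \<delta>)"
  define a where "a = \<gamma> * sqrt (lp / real n)"
  define b where "b = 4 * sqrt (2 * L) * sqrt lp / (real n * \<epsilon>)"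
  define \<sigma>1 where "\<sigma>1 = dp_sigma1 n \<epsilon> \<delta>"
  define M1 where "M1 = PiM {..<n} (\<lambda>_. D)"
  define M2 where "M2 = noise_measure p \<sigma>1"
  define hh where "hh = (\<lambda>x::real. (36 + 4*x\<^sup>2) * exp (3*(x\<^sup>2-b\<^sup>2)/(8*\<sigma>1\<^sup>2)))"
  define B where "B = (\<lambda>i j. {xs \<in> space M1. \<bar>sample_cov n xs i j - cov D i j\<bar> > a})"
  have tau: "dp_tau \<gamma> p n \<epsilon> \<delta> = a + b" unfolding dp_tau_def a_def b_def lp_def L_def by simp
  have pr: "real p \<ge> 2" "real n \<ge> 1" "real n \<le> real p" using p2 n1 np by auto
  have lp: "lp \<ge> 1/2"
  proof -
    have "ln (1 / real p) \<le> 1 / real p - 1" using pr by (intro ln_le_minus_one) auto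
    moreover have "ln (1 / real p) = - lp" unfolding lp_def using pr by (simp add: ln_div)
    moreover have "1 / real p \<le> 1/2" using pr by simp
    ultimately show ?thesis by linarith
  qed
  have L: "L \<ge> 1/5"
  proof -
    have "ln (\<delta> / 1.25) \<le> \<delta> / 1.25 - 1" using d by (intro ln_le_minus_one) auto
    moreover have "ln (\<delta> / 1.25) = - L" unfolding L_def using d by (simp add: ln_div)
    moreover have "\<delta> / 1.25 \<le> 4/5" using d by simp
    ultimately show ?thesis by linarith
  qed
  have \<sigma>1: "\<sigma>1 = sqrt (2*L) / (real n * \<epsilon>)" unfolding \<sigma>1_def dp_sigma1_def L_def ..
  have \<sigma>1pos: "\<sigma>1 > 0" unfolding \<sigma>1 using L pr e by auto
  have \<sigma>1sq: "\<sigma>1\<^sup>2 = 2 * L / (real n ^ 2 * \<epsilon>\<^sup>2)" unfolding \<sigma>1 using L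
    by (simp add: power_divide power_mult_distrib)
  have bsig: "b = 4 * \<sigma>1 * sqrt lp" unfolding b_def \<sigma>1 by simp
  have bsq: "b\<^sup>2 = 16 * \<sigma>1\<^sup>2 * lp" unfolding bsig using lp by (simp add: power_mult_distrib)
  have b2: "b\<^sup>2 = 32 * L * lp / (real n ^ 2 * \<epsilon>\<^sup>2)" unfolding bsq \<sigma>1sq by simp
  have a2: "a\<^sup>2 = \<gamma>\<^sup>2 * lp / real n" unfolding a_def using lp pr by (simp add: power_mult_distrib)
  have apos: "a > 0" unfolding a_def using lp pr g by simp
  have b0: "b \<ge> 0" unfolding bsig using \<sigma>1pos lp by simp
  have ex6: "exp (-3*b\<^sup>2/(8*\<sigma>1\<^sup>2)) = 1 / real p ^ 6"
  proof -
    have "-3*b\<^sup>2/(8*\<sigma>1\<^sup>2) = - (real 6 * lp)" unfolding bsq using \<sigma>1pos by (simp add: field_simps)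
    then have "exp (-3*b\<^sup>2/(8*\<sigma>1\<^sup>2)) = inverse (exp (real 6 * lp))" by (simp only: exp_minus)
    then have "exp (-3*b\<^sup>2/(8*\<sigma>1\<^sup>2)) = inverse (exp lp ^ 6)" by (simp only: exp_of_nat_mult)
    moreover have "exp lp = real p" unfolding lp_def using pr by simp
    ultimately show ?thesis by (simp only: inverse_eq_divide)
  qed
  have ex8: "exp (- 8 * real n * a\<^sup>2 / \<gamma>\<^sup>2) = 1 / real p ^ 8"
  proof -
    have "- 8 * real n * a\<^sup>2 / \<gamma>\<^sup>2 = - (real 8 * lp)" unfolding a2 using g pr by (simp add: field_simps)
    then have "exp (- 8 * real n * a\<^sup>2 / \<gamma>\<^sup>2) = inverse (exp (real 8 * lp))" by (simp only: exp_minus)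
    then have "exp (- 8 * real n * a\<^sup>2 / \<gamma>\<^sup>2) = inverse (exp lp ^ 8)" by (simp only: exp_of_nat_mult)
    moreover have "exp lp = real p" unfolding lp_def using pr by simp
    ultimately show ?thesis by (simp only: inverse_eq_divide)
  qed
  have PM1: "prob_space M1" unfolding M1_def using PD by (intro prob_space_PiM) auto
  interpret M1: prob_space M1 by (rule PM1)
  have PN: "prob_space (density lborel (normal_density 0 \<sigma>1))" by (rule prob_space_normal_density) (rule \<sigma>1pos)
  have PM2: "prob_space M2" unfolding M2_def noise_measure_def using PN by (intro prob_space_PiM) auto
  have Dcomp: "(\<lambda>x. x i) \<in> borel_measurable D" if "i < p" for i
    using measurable_component_singleton[of i "{..<p}" "\<lambda>_. borel"] that
    by (subst measurable_cong_sets[OF setsD refl]) auto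
  have M1comp: "(\<lambda>xs. xs k i) \<in> borel_measurable M1" if "k < n" "i < p" for k i
    unfolding M1_def
    using measurable_compose[OF measurable_component_singleton[of k "{..<n}" "\<lambda>_. D"] Dcomp[of i]] that by auto
  have scmeas: "(\<lambda>xs. sample_cov n xs i j) \<in> borel_measurable M1" if "i < p" "j < p" for i j
    unfolding sample_cov_def
    by (intro borel_measurable_times borel_measurable_const borel_measurable_sum M1comp) (use that in auto)
  have Bmeas: "B i j \<in> sets M1" if "i < p" "j < p" for i j
  proof -
    have "(\<lambda>xs. \<bar>sample_cov n xs i j - cov D i j\<bar>) \<in> borel_measurable M1"
      using scmeas[OF that] by measurable
    then have "{xs \<in> space M1. a < \<bar>sample_cov n xs i j - cov D i j\<bar>} \<in> sets M1" by measurable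
    then show ?thesis unfolding B_def .
  qed
  have at: "a \<le> t0" using at0 unfolding a_def lp_def .
  have PB: "emeasure M1 (B i j) \<le> ennreal (C1 / real p ^ 8)" if "i < p" "j < p" for i j
  proof -
    have "measure M1 (B i j) \<le> C1 * exp (- 8 * real n * a\<^sup>2 / \<gamma>\<^sup>2)"
      using conc[rule_format, OF that apos at] unfolding B_def M1_def by simp
    then have "measure M1 (B i j) \<le> C1 / real p ^ 8" unfolding ex8 by simp
    then show ?thesis using M1.emeasure_eq_measure by (simp add: ennreal_leI)
  qed

  have xbd: "\<bar>x i\<bar> \<le> 1" if "(\<Sum>j<p. (x j)\<^sup>2) \<le> 1" "i < p" for x :: "nat \<Rightarrow> real" and i
  proof -
    have "(x i)\<^sup>2 \<le> (\<Sum>j<p. (x j)\<^sup>2)" using that(2) by (intro member_le_sum) auto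
    then show ?thesis using that(1) abs_square_le_1 by (metis order_trans)
  qed
  have covbd: "\<bar>cov D i j\<bar> \<le> 1" if ij: "i < p" "j < p" for i j
  proof -
    interpret PDi: prob_space D by (rule PD)
    have ae: "AE x in D. \<bar>x i * x j\<bar> \<le> 1"
      using AEn
    proof (eventually_elim)
      case (elim x)
      then show ?case using xbd[OF elim ij(1)] xbd[OF elim ij(2)]
        by (simp add: abs_mult mult_le_one)
    qed
    show ?thesis
    proof (cases "integrable D (\<lambda>x. x i * x j)")
      case True
      have "(\<integral>x. x i * x j \<partial>D) \<le> 1"
        by (rule PDi.integral_le_const[OF True]) (use ae in \<open>auto elim: AE_mp\<close>)
      moreover have "(\<integral>x. - (x i * x j) \<partial>D) \<le> 1"
        by (rule PDi.integral_le_const) (use True ae in \<open>auto elim: AE_mp\<close>)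
      ultimately show ?thesis unfolding cov_def by auto
    next
      case False
      then show ?thesis unfolding cov_def by (simp add: not_integrable_integral_eq)
    qed
  qed
  have scbd: "\<bar>sample_cov n xs i j\<bar> \<le> 1"
    if xs: "\<forall>k\<in>{..<n}. (\<Sum>j<p. (xs k j)\<^sup>2) \<le> 1" and ij: "i < p" "j < p" for xs i j
  proof -
    have "\<bar>\<Sum>k<n. xs k i * xs k j\<bar> \<le> (\<Sum>k<n. \<bar>xs k i * xs k j\<bar>)" by (rule sum_abs)
    also have "\<dots> \<le> (\<Sum>k<n. 1)"
      using xs xbd ij by (intro sum_mono) (auto simp: abs_mult intro!: mult_le_one)
    finally have "\<bar>\<Sum>k<n. xs k i * xs k j\<bar> \<le> real n" by simp
    then show ?thesis unfolding sample_cov_def using pr by (simp add: abs_mult divide_le_eq)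
  qed
  have AE1: "AE xs in M1. \<forall>k\<in>{..<n}. (\<Sum>j<p. (xs k j)\<^sup>2) \<le> 1"
  proof -
    interpret PP: product_prob_space "\<lambda>_. D" "{..<n}" by (rule product_prob_spaceI) (rule PD)
    show ?thesis unfolding M1_def
      by (intro AE_finite_allI) (auto intro!: PP.AE_component AEn)
  qed
  have AE2: "AE \<omega> in M1 \<Otimes>\<^sub>M M2. \<forall>k\<in>{..<n}. (\<Sum>j<p. (fst \<omega> k j)\<^sup>2) \<le> 1"
    by (rule AE_distrD[OF measurable_fst]) (subst prob_space.distr_pair_fst[OF PM2], rule AE1)
  interpret P12: pair_prob_space M1 M2
    unfolding pair_prob_space_def pair_sigma_finite_def using PM1 PM2 by (simp add: prob_space_imp_sigma_finite)
  define c0 where "c0 = 8*(a+b)\<^sup>2*(real s+1)\<^sup>2"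
  define c1 where "c1 = 4*(real p)\<^sup>2*(3+(a+b))\<^sup>2"
  define c2 where "c2 = 2*(real p)\<^sup>2"
  define K2 where "K2 = 2 * (1 / real p ^ 6) * (36 + 16*\<sigma>1\<^sup>2)"
  define F1 where "F1 = (\<lambda>i j (\<omega>::(nat \<Rightarrow> nat \<Rightarrow> real) \<times> ((nat \<times> nat) \<Rightarrow> real)). ennreal c1 * indicator (B i j) (fst \<omega>))"
  define F2 where "F2 = (\<lambda>i j (\<omega>::(nat \<Rightarrow> nat \<Rightarrow> real) \<times> ((nat \<times> nat) \<Rightarrow> real)). ennreal c2 * ennreal (hh (snd \<omega> (min i j, max i j))))"
  have c0: "c0 \<ge> 0" and c1: "c1 \<ge> 0" and c2: "c2 \<ge> 0" unfolding c0_def c1_def c2_def by auto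
  have hh0: "hh x \<ge> 0" for x unfolding hh_def by auto
  have hhm[measurable]: "hh \<in> borel_measurable borel" unfolding hh_def by measurable
  have F1m: "F1 i j \<in> borel_measurable (M1 \<Otimes>\<^sub>M M2)" if "i < p" "j < p" for i j
  proof -
    have [measurable]: "B i j \<in> sets M1" using Bmeas that .
    show ?thesis unfolding F1_def by measurable
  qed
  have upd: "(min i j, max i j) \<in> upper_idx p" if "i < p" "j < p" for i j
    using that unfolding upper_idx_def by (auto simp: min_def max_def)
  have F2m: "F2 i j \<in> borel_measurable (M1 \<Otimes>\<^sub>M M2)" if "i < p" "j < p" for i j
  proof -
    have [measurable]: "(\<lambda>z. z (min i j, max i j)) \<in> borel_measurable M2"
      unfolding M2_def noise_measure_def
      using measurable_component_singleton[OF upd[OF that], of "\<lambda>_. density lborel (normal_density 0 \<sigma>1)"]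
      by (subst measurable_cong_sets[OF refl, where N'="density lborel (normal_density 0 \<sigma>1)"]) auto
    show ?thesis unfolding F2_def by measurable
  qed
  have intF1: "integral\<^sup>N (M1 \<Otimes>\<^sub>M M2) (F1 i j) \<le> ennreal (c1 * (C1 / real p ^ 8))" if "i < p" "j < p" for i j
  proof -
    have [measurable]: "B i j \<in> sets M1" using Bmeas that .
    have "integral\<^sup>N (M1 \<Otimes>\<^sub>M M2) (F1 i j) = ennreal c1 * (\<integral>\<^sup>+\<omega>. indicator (B i j) (fst \<omega>) \<partial>(M1 \<Otimes>\<^sub>M M2))"
      unfolding F1_def by (rule nn_integral_cmult) measurable
    also have "(\<integral>\<^sup>+\<omega>. indicator (B i j) (fst \<omega>) \<partial>(M1 \<Otimes>\<^sub>M M2)) = (\<integral>\<^sup>+x. indicator (B i j) x \<partial>M1)"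
      by (rule nn_fst[OF PM2]) measurable
    also have "\<dots> = emeasure M1 (B i j)" by simp
    finally have "integral\<^sup>N (M1 \<Otimes>\<^sub>M M2) (F1 i j) \<le> ennreal c1 * ennreal (C1 / real p ^ 8)"
      using PB[OF that] by (simp add: mult_left_mono)
    moreover have "ennreal c1 * ennreal (C1 / real p ^ 8) = ennreal (c1 * (C1 / real p ^ 8))"
      by (rule ennreal_mult[symmetric]) (use c1 C1 in auto)
    ultimately show ?thesis by (simp only:)
  qed
  have hm2: "(\<lambda>x. ennreal (hh x)) \<in> borel_measurable (density lborel (normal_density 0 \<sigma>1))"
  proof -
    have e1: "measurable (density lborel (normal_density 0 \<sigma>1)) (borel::ennreal measure) = measurable borel borel"
      by (intro measurable_cong_sets) auto
    have "(\<lambda>x. ennreal (hh x)) \<in> borel_measurable borel" by measurable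
    then show ?thesis by (simp only: e1)
  qed
  have intF2: "integral\<^sup>N (M1 \<Otimes>\<^sub>M M2) (F2 i j) = ennreal (c2 * K2)" if "i < p" "j < p" for i j
  proof -
    have [measurable]: "(\<lambda>z. z (min i j, max i j)) \<in> borel_measurable M2"
      unfolding M2_def noise_measure_def
      using measurable_component_singleton[OF upd[OF that], of "\<lambda>_. density lborel (normal_density 0 \<sigma>1)"]
      by (subst measurable_cong_sets[OF refl, where N'="density lborel (normal_density 0 \<sigma>1)"]) auto
    have "integral\<^sup>N (M1 \<Otimes>\<^sub>M M2) (F2 i j) = ennreal c2 * (\<integral>\<^sup>+\<omega>. ennreal (hh (snd \<omega> (min i j, max i j))) \<partial>(M1 \<Otimes>\<^sub>M M2))"
      unfolding F2_def by (rule nn_integral_cmult) measurable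
    also have "(\<integral>\<^sup>+\<omega>. ennreal (hh (snd \<omega> (min i j, max i j))) \<partial>(M1 \<Otimes>\<^sub>M M2)) = (\<integral>\<^sup>+z. ennreal (hh (z (min i j, max i j))) \<partial>M2)"
      by (rule nn_snd[OF PM1 PM2, where f="\<lambda>z. ennreal (hh (z (min i j, max i j)))"]) measurable
    also have "\<dots> = (\<integral>\<^sup>+x. ennreal (hh x) \<partial>(density lborel (normal_density 0 \<sigma>1)))"
      unfolding M2_def noise_measure_def by (rule nn_comp[OF PN upd[OF that] hm2])
    also have "\<dots> = ennreal K2"
      unfolding hh_def gauss_int[OF \<sigma>1pos] ex6 K2_def ..
    moreover have "K2 \<ge> 0" unfolding K2_def by simp
    ultimately show ?thesis using c2 by (simp add: ennreal_mult)
  qed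
  have pw: "AE \<omega> in M1 \<Otimes>\<^sub>M M2. ennreal ((op_norm p w
          (\<lambda>i j. dp_threshold n (a + b) (fst \<omega>) (snd \<omega>) i j - cov D i j))\<^sup>2)
        \<le> ennreal c0 + (\<Sum>i<p. \<Sum>j<p. F1 i j \<omega> + F2 i j \<omega>)"
    using AE2
  proof (rule AE_mp, intro AE_I2 impI)
    fix \<omega> assume om: "\<omega> \<in> space (M1 \<Otimes>\<^sub>M M2)" and good: "\<forall>k\<in>{..<n}. (\<Sum>j<p. (fst \<omega> k j)\<^sup>2) \<le> 1"
    define xs where "xs = fst \<omega>"
    define z where "z = snd \<omega>"
    have xsM: "xs \<in> space M1" using om unfolding xs_def by (auto simp: space_pair_measure)
    have eqm: "(\<lambda>i j. dp_threshold n (a + b) xs z i j - cov D i j) =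
      (\<lambda>i j. (if \<bar>sample_cov n xs i j + sym_noise z i j\<bar> > a+b then sample_cov n xs i j + sym_noise z i j else 0) - cov D i j)"
      by (simp add: dp_threshold_def Let_def)
    have "(op_norm p w (\<lambda>i j. (if \<bar>sample_cov n xs i j + sym_noise z i j\<bar> > a+b then sample_cov n xs i j + sym_noise z i j else 0) - cov D i j))\<^sup>2
      \<le> 8*(a+b)\<^sup>2*(real s+1)\<^sup>2 + (\<Sum>i<p. \<Sum>j<p. 4*(real p)\<^sup>2*(3+(a+b))\<^sup>2 * indicator (B i j) xs
        + 2*(real p)\<^sup>2 * ((36 + 4*(sym_noise z i j)\<^sup>2) * exp (3*((sym_noise z i j)\<^sup>2-b\<^sup>2)/(8*\<sigma>1\<^sup>2))))"
    proof (rule pointwise)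
      show "0 < p" using p2 by simp
      show "1 \<le> w" by (rule w)
      show "0 \<le> a" "0 \<le> b" using apos b0 by auto
      show "\<bar>cov D i j\<bar> \<le> 1 \<and> \<bar>sample_cov n xs i j\<bar> \<le> 1" if "i < p" "j < p" for i j
        using covbd[OF that] scbd[OF good[folded xs_def] that] by simp
      show "cov D i j = cov D j i" for i j unfolding cov_def by (simp add: mult.commute)
      show "sample_cov n xs i j = sample_cov n xs j i" for i j unfolding sample_cov_def by (simp add: mult.commute)
      show "sym_noise z i j = sym_noise z j i" for i j unfolding sym_noise_def by (simp add: min.commute max.commute)
      show "G0 p s (cov D)" by (rule G)
      show "indicator (B i j) xs = (if a < \<bar>sample_cov n xs i j - cov D i j\<bar> then 1 else 0)" for i j
        using xsM unfolding B_def by (simp add: indicator_def)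
    qed
    also have "\<dots> = c0 + (\<Sum>i<p. \<Sum>j<p. c1 * indicator (B i j) xs + c2 * hh (z (min i j, max i j)))"
      unfolding c0_def c1_def c2_def hh_def sym_noise_def by simp
    finally have le: "(op_norm p w (\<lambda>i j. dp_threshold n (a + b) xs z i j - cov D i j))\<^sup>2
       \<le> c0 + (\<Sum>i<p. \<Sum>j<p. c1 * indicator (B i j) xs + c2 * hh (z (min i j, max i j)))"
      unfolding eqm .
    have nn: "0 \<le> c1 * indicator (B i j) xs + c2 * hh (z (min i j, max i j))" for i j
      using c1 c2 hh0 by (auto intro!: add_nonneg_nonneg mult_nonneg_nonneg)
    have "ennreal (c0 + (\<Sum>i<p. \<Sum>j<p. c1 * indicator (B i j) xs + c2 * hh (z (min i j, max i j))))
       = ennreal c0 + (\<Sum>i<p. \<Sum>j<p. ennreal (c1 * indicator (B i j) xs + c2 * hh (z (min i j, max i j))))"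
      using c0 nn by (simp add: sum_nonneg)
    also have "\<dots> = ennreal c0 + (\<Sum>i<p. \<Sum>j<p. F1 i j \<omega> + F2 i j \<omega>)"
    proof -
      have "ennreal (c1 * indicator (B i j) xs + c2 * hh (z (min i j, max i j))) = F1 i j \<omega> + F2 i j \<omega>" for i j
        unfolding F1_def F2_def xs_def z_def using c1 c2 hh0
        by (simp add: ennreal_mult ennreal_indicator)
      then show ?thesis by simp
    qed
    finally have EQ: "ennreal (c0 + (\<Sum>i<p. \<Sum>j<p. c1 * indicator (B i j) xs + c2 * hh (z (min i j, max i j))))
       = ennreal c0 + (\<Sum>i<p. \<Sum>j<p. F1 i j \<omega> + F2 i j \<omega>)" .
    have L1: "ennreal ((op_norm p w (\<lambda>i j. dp_threshold n (a + b) xs z i j - cov D i j))\<^sup>2)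
       \<le> ennreal (c0 + (\<Sum>i<p. \<Sum>j<p. c1 * indicator (B i j) xs + c2 * hh (z (min i j, max i j))))"
      by (rule ennreal_leI[OF le])
    from ord_le_eq_trans[OF L1 EQ]
    show "ennreal ((op_norm p w (\<lambda>i j. dp_threshold n (a + b) (fst \<omega>) (snd \<omega>) i j - cov D i j))\<^sup>2)
        \<le> ennreal c0 + (\<Sum>i<p. \<Sum>j<p. F1 i j \<omega> + F2 i j \<omega>)"
      unfolding xs_def z_def .
  qed
  have "(\<integral>\<^sup>+ \<omega>. ennreal ((op_norm p w
          (\<lambda>i j. dp_threshold n (a + b) (fst \<omega>) (snd \<omega>) i j - cov D i j))\<^sup>2) \<partial>(M1 \<Otimes>\<^sub>M M2))
     \<le> (\<integral>\<^sup>+ \<omega>. ennreal c0 + (\<Sum>i<p. \<Sum>j<p. F1 i j \<omega> + F2 i j \<omega>) \<partial>(M1 \<Otimes>\<^sub>M M2))"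
    by (rule nn_integral_mono_AE[OF pw])
  also have "\<dots> = ennreal c0 + (\<Sum>i<p. \<Sum>j<p. integral\<^sup>N (M1 \<Otimes>\<^sub>M M2) (F1 i j) + integral\<^sup>N (M1 \<Otimes>\<^sub>M M2) (F2 i j))"
  proof -
    have m: "(\<lambda>\<omega>. \<Sum>j<p. F1 i j \<omega> + F2 i j \<omega>) \<in> borel_measurable (M1 \<Otimes>\<^sub>M M2)" if "i < p" for i
      using F1m F2m that by (intro borel_measurable_sum borel_measurable_add) auto
    have "(\<integral>\<^sup>+ \<omega>. ennreal c0 + (\<Sum>i<p. \<Sum>j<p. F1 i j \<omega> + F2 i j \<omega>) \<partial>(M1 \<Otimes>\<^sub>M M2))
       = (\<integral>\<^sup>+ \<omega>. ennreal c0 \<partial>(M1 \<Otimes>\<^sub>M M2)) + (\<integral>\<^sup>+ \<omega>. (\<Sum>i<p. \<Sum>j<p. F1 i j \<omega> + F2 i j \<omega>) \<partial>(M1 \<Otimes>\<^sub>M M2))"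
      by (rule nn_integral_add) (use m in \<open>auto intro!: borel_measurable_sum\<close>)
    also have "(\<integral>\<^sup>+ \<omega>. ennreal c0 \<partial>(M1 \<Otimes>\<^sub>M M2)) = ennreal c0"
      using P12.emeasure_space_1 by (simp add: nn_integral_const)
    also have "(\<integral>\<^sup>+ \<omega>. (\<Sum>i<p. \<Sum>j<p. F1 i j \<omega> + F2 i j \<omega>) \<partial>(M1 \<Otimes>\<^sub>M M2))
       = (\<Sum>i<p. \<integral>\<^sup>+ \<omega>. (\<Sum>j<p. F1 i j \<omega> + F2 i j \<omega>) \<partial>(M1 \<Otimes>\<^sub>M M2))"
      by (rule nn_integral_sum) (use m in auto)
    also have "\<dots> = (\<Sum>i<p. \<Sum>j<p. integral\<^sup>N (M1 \<Otimes>\<^sub>M M2) (F1 i j) + integral\<^sup>N (M1 \<Otimes>\<^sub>M M2) (F2 i j))"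
    proof (rule sum.cong[OF refl])
      fix i assume "i \<in> {..<p}"
      then have i: "i < p" by simp
      have "(\<integral>\<^sup>+ \<omega>. (\<Sum>j<p. F1 i j \<omega> + F2 i j \<omega>) \<partial>(M1 \<Otimes>\<^sub>M M2))
         = (\<Sum>j<p. \<integral>\<^sup>+ \<omega>. F1 i j \<omega> + F2 i j \<omega> \<partial>(M1 \<Otimes>\<^sub>M M2))"
        by (rule nn_integral_sum) (use F1m F2m i in \<open>auto intro!: borel_measurable_add\<close>)
      also have "\<dots> = (\<Sum>j<p. integral\<^sup>N (M1 \<Otimes>\<^sub>M M2) (F1 i j) + integral\<^sup>N (M1 \<Otimes>\<^sub>M M2) (F2 i j))"
        by (rule sum.cong[OF refl], rule nn_integral_add) (use F1m F2m i in auto)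
      finally show "(\<integral>\<^sup>+ \<omega>. (\<Sum>j<p. F1 i j \<omega> + F2 i j \<omega>) \<partial>(M1 \<Otimes>\<^sub>M M2))
         = (\<Sum>j<p. integral\<^sup>N (M1 \<Otimes>\<^sub>M M2) (F1 i j) + integral\<^sup>N (M1 \<Otimes>\<^sub>M M2) (F2 i j))" .
    qed
    finally show ?thesis .
  qed
  also have "\<dots> \<le> ennreal c0 + (\<Sum>i<p. \<Sum>j<p. ennreal (c1 * (C1 / real p ^ 8) + c2 * K2))"
    using intF1 intF2 c1 c2 C1 by (intro add_mono order_refl sum_mono) (auto simp: K2_def)
  also have "\<dots> = ennreal (c0 + real p * (real p * (c1 * (C1 / real p ^ 8) + c2 * K2)))"
  proof -
    have nn: "0 \<le> c1 * (C1 / real p ^ 8) + c2 * K2" using c1 c2 C1 by (auto simp: K2_def)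
    then show ?thesis using c0 by (simp add: ennreal_mult ennreal_of_nat_eq_real_of_nat)
  qed
  also have "\<dots> \<le> ennreal (((10*\<gamma>\<^sup>2+64)*(32+8*C1) + 720*C1 + 1696) * (real s)\<^sup>2 * lp * L / (real n * \<epsilon>\<^sup>2))"
  proof (rule ennreal_leI)
    have pp: "real p > 0" using pr by simp
    have "c0 + real p * (real p * (c1 * (C1 / real p ^ 8) + c2 * K2))
      = 8*(a+b)\<^sup>2*(real s+1)\<^sup>2 + 4*C1*(3+(a+b))\<^sup>2/real p^4 + 4*(36+16*\<sigma>1\<^sup>2)/real p^2"
    proof -
      have "real p * (real p * (c1 * (C1 / real p ^ 8) + c2 * K2)) =
        real p * (real p * (4*(real p)\<^sup>2*(3+(a+b))\<^sup>2*(C1/real p^8))) + real p * (real p * (2*(real p)\<^sup>2*(2 * (1 / real p ^ 6) * (36 + 16*\<sigma>1\<^sup>2))))"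
        unfolding c1_def c2_def K2_def by (simp add: algebra_simps)
      also have "\<dots> = 4*C1*(3+(a+b))\<^sup>2/real p^4 + 4*(36+16*\<sigma>1\<^sup>2)/real p^2"
        by (simp only: alg1[OF pp] alg2[OF pp])
      finally show ?thesis unfolding c0_def by simp
    qed
    also have "\<dots> \<le> ((10*\<gamma>\<^sup>2+64)*(32+8*C1) + 720*C1 + 1696) * (real s)\<^sup>2 * lp * L / (real n * \<epsilon>\<^sup>2)"
      by (rule final_arith[OF g C1 e lp L n1 np s1 a2 b2 refl apos[THEN less_imp_le] b0 \<sigma>1sq])
    finally show "c0 + real p * (real p * (c1 * (C1 / real p ^ 8) + c2 * K2))
      \<le> ((10*\<gamma>\<^sup>2+64)*(32+8*C1) + 720*C1 + 1696) * (real s)\<^sup>2 * lp * L / (real n * \<epsilon>\<^sup>2)" .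
  qed
  finally show ?thesis unfolding tau M1_def M2_def \<sigma>1_def lp_def L_def .
qed


theorem corollary1:
  fixes \<sigma>sq \<gamma> C1 t0 :: real
  assumes "\<sigma>sq > 0" "\<gamma> > 0" "C1 > 0" "t0 > 0"
  shows "\<exists>C>0. \<forall>(p::nat) (n::nat) (s::nat) (\<epsilon>::real) (\<delta>::real) (D :: (nat \<Rightarrow> real) measure) (w::ereal).
    2 \<le> p \<longrightarrow> 1 \<le> n \<longrightarrow> n \<le> p \<longrightarrow> 1 \<le> s \<longrightarrow>
    0 < \<epsilon> \<longrightarrow> \<epsilon> \<le> 1 \<longrightarrow> 0 < \<delta> \<longrightarrow> \<delta> \<le> 1 \<longrightarrow> 1 \<le> w \<longrightarrow>
    prob_space D \<longrightarrow> sets D = sets (PiM {..<p} (\<lambda>_. borel)) \<longrightarrow>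
    (\<forall>j<p. integrable D (\<lambda>x. x j) \<and> (\<integral>x. x j \<partial>D) = 0) \<longrightarrow>
    (AE x in D. (\<Sum>j<p. (x j)\<^sup>2) \<le> 1) \<longrightarrow>
    (\<forall>v t. (\<Sum>j<p. (v j)\<^sup>2) = 1 \<longrightarrow> t > 0 \<longrightarrow>
        measure D {x \<in> space D. \<bar>\<Sum>j<p. v j * x j\<bar> > t} \<le> exp (- t\<^sup>2 / (2 * \<sigma>sq))) \<longrightarrow>
    G0 p s (cov D) \<longrightarrow>
    (\<forall>i<p. \<forall>j<p. \<forall>t. 0 < t \<longrightarrow> t \<le> t0 \<longrightarrow>
        measure (PiM {..<n} (\<lambda>_. D))
          {xs \<in> space (PiM {..<n} (\<lambda>_. D)). \<bar>sample_cov n xs i j - cov D i j\<bar> > t}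
        \<le> C1 * exp (- 8 * real n * t\<^sup>2 / \<gamma>\<^sup>2)) \<longrightarrow>
    \<gamma> * sqrt (ln (real p) / real n) \<le> t0 \<longrightarrow>
    (\<integral>\<^sup>+ \<omega>. ennreal ((op_norm p w
          (\<lambda>i j. dp_threshold n (dp_tau \<gamma> p n \<epsilon> \<delta>) (fst \<omega>) (snd \<omega>) i j - cov D i j))\<^sup>2)
       \<partial>(PiM {..<n} (\<lambda>_. D) \<Otimes>\<^sub>M noise_measure p (dp_sigma1 n \<epsilon> \<delta>)))
    \<le> ennreal (C * (real s)\<^sup>2 * ln (real p) * ln (1.25 / \<delta>) / (real n * \<epsilon>\<^sup>2))"
  proof -
  define C0 where "C0 = (10*\<gamma>\<^sup>2+64)*(32+8*C1) + 720*C1 + 1696"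
  have C0: "C0 > 0" unfolding C0_def using assms by (intro add_pos_pos mult_pos_pos) auto
  show ?thesis
    apply (rule exI[of _ C0])
    apply (intro conjI allI impI)
     apply (rule C0)
    unfolding C0_def
    apply (rule main[OF assms(2) assms(3)])
                apply assumption+
    done
qed

end
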